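(* Let $\varphi$ be a quantifier-free formula in the SMT theory of floating-point numbers and $\mathit{cost}$ a floating-point variable occurring in $\varphi$, of sort with $e$ exponent bits and $s$ significand bits (including the hidden bit), so that $\mathit{cost}$ is a vector of $n=e+s$ bits. Let $\varphi_{\mathrm{noNaN}}:=\varphi\wedge\neg\mathrm{isNaN}(\mathit{cost})$ be satisfiable, and consider the minimization (resp. maximization) of $\mathit{cost}$ subject to $\varphi_{\mathrm{noNaN}}$. Let $k\in[0..n-1]$, let $\tau_k$ be an assignment to $\mathit{cost}[0],\dots,\mathit{cost}[k-1]$, and let $d$ be the dynamic attractor for $\mathit{cost}$ with respect to $\tau_k$. Let $\tau_{k+1}:=\tau_k\cup\{\mathit{cost}[k]:=d[k]\}$ and $\tau'_{k+1}:=\tau_k\cup\{\mathit{cost}[k]:=\overline{d[k]}\}$, and let $\mathcal{M},\mathcal{M}'$ be models of $\varphi_{\mathrm{noNaN}}$ extending $\tau_{k+1}$ and $\tau'_{k+1}$ respectively. Then $\mathcal{M}(\mathit{cost})\le\mathcal{M}'(\mathit{cost})$ (resp. $\mathcal{M}(\mathit{cost})\ge\mathcal{M}'(\mathit{cost})$).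
   Context: Bits are indexed from the most significant bit $\mathit{cost}[0]$ to the least significant $\mathit{cost}[n-1]$; $\mathit{cost}[0]$ is the sign bit $\sigma$, $\mathit{cost}[1..e]$ is the exponent $E$ (read as an unsigned integer) and $\mathit{cost}[e+1..n-1]$ is the stored significand $m$ of $s-1$ bits. With bias $b=2^{e-1}-1$, IEEE 754-2008 semantics: if $E$ is all ones and $m=0$ the value is $+\infty$ or $-\infty$ according to $\sigma$; if $E$ is all ones and $m\ne0$ the value is NaN; if $E=0$ the value is the subnormal $(-1)^\sigma 2^{1-b}(0.m)_2$; otherwise it is the normal $(-1)^\sigma 2^{E-b}(1.m)_2$. The order $\le$ is the usual total order on non-NaN floating-point values (real order extended by $\pm\infty$, with $+0$ and $-0$ equal). The dynamic attractor for $\mathit{cost}$ with respect to an assignment $\tau_k$ to its $k$ most significant bits is the smallest (resp., when maximizing, largest) floating-point value different from NaN whose $k$ most significant bits coincide with those assigned by $\tau_k$; $d[k]$ denotes its $k$-th bit and $\overline{d[k]}$ the complement bit. *)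

theory Defs
  imports Complex_Main "HOL-Library.Extended_Real"
begin

text \<open>IEEE 754-2008 binary floating-point numbers with e exponent bits and
 s significand bits (including the hidden bit), represented as bit lists of
 length n = e + s, most significant bit first (bit 0 = sign bit).\<close>

definition bits_to_nat :: "bool list \<Rightarrow> nat" where
  "bits_to_nat xs = foldl (\<lambda>a b. 2 * a + (if b then 1 else 0)) 0 xs"

definition fp_sign :: "bool list \<Rightarrow> bool" where
  "fp_sign x = x ! 0"

definition fp_exp :: "nat \<Rightarrow> bool list \<Rightarrow> nat" where
  "fp_exp e x = bits_to_nat (take e (drop 1 x))"

definition fp_sig :: "nat \<Rightarrow> bool list \<Rightarrow> nat" where
  "fp_sig e x = bits_to_nat (drop (e + 1) x)"

definition fp_bias :: "nat \<Rightarrow> int" where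
  "fp_bias e = 2 ^ (e - 1) - 1"

definition fp_is_nan :: "nat \<Rightarrow> bool list \<Rightarrow> bool" where
  "fp_is_nan e x \<longleftrightarrow> fp_exp e x = 2 ^ e - 1 \<and> fp_sig e x \<noteq> 0"

text \<open>Value of a non-NaN float (for NaN the result is irrelevant).\<close>
definition fp_val :: "nat \<Rightarrow> nat \<Rightarrow> bool list \<Rightarrow> ereal" where
  "fp_val e s x =
     (let \<sigma> = fp_sign x; E = fp_exp e x; m = fp_sig e x;
          sg = (if \<sigma> then -1 else 1 :: real);
          frac = real m / 2 ^ (s - 1) in
      if E = 2 ^ e - 1 then (if \<sigma> then -\<infinity> else \<infinity>)
      else if E = 0 then ereal (sg * 2 powr real_of_int (1 - fp_bias e) * frac)
      else ereal (sg * 2 powr real_of_int (int E - fp_bias e) * (1 + frac)))"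

definition fp_attractor :: "nat \<Rightarrow> nat \<Rightarrow> bool \<Rightarrow> bool list \<Rightarrow> bool list \<Rightarrow> bool" where
  "fp_attractor e s maxi tau d \<longleftrightarrow>
     length d = e + s \<and> \<not> fp_is_nan e d \<and> take (length tau) d = tau \<and>
     (\<forall>x. length x = e + s \<and> \<not> fp_is_nan e x \<and> take (length tau) x = tau \<longrightarrow>
        (if maxi then fp_val e s x \<le> fp_val e s d else fp_val e s d \<le> fp_val e s x))"

end

theory Submission
  imports Defs
begin

abbreviation bstep :: "nat \<Rightarrow> bool \<Rightarrow> nat" where
  "bstep \<equiv> (\<lambda>a b. 2 * a + (if b then 1 else 0))"

lemma foldl_b2n: "foldl bstep a ys = a * 2 ^ length ys + foldl bstep 0 ys"
proof (induction ys arbitrary: a)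
  case Nil then show ?case by simp
next
  case (Cons y ys)
  have "foldl bstep a (y # ys) = foldl bstep (bstep a y) ys" by simp
  also have "\<dots> = bstep a y * 2 ^ length ys + foldl bstep 0 ys" using Cons by blast
  also have "foldl bstep 0 (y # ys) = bstep 0 y * 2 ^ length ys + foldl bstep 0 ys"
    using Cons[of "bstep 0 y"] by simp
  ultimately show ?case by (simp add: algebra_simps)
qed

lemma b2n_append: "bits_to_nat (xs @ ys) = bits_to_nat xs * 2 ^ length ys + bits_to_nat ys"
  unfolding bits_to_nat_def by (simp add: foldl_b2n[of "foldl bstep 0 xs"])

lemma b2n_Nil: "bits_to_nat [] = 0" by (simp add: bits_to_nat_def)

lemma b2n_single: "bits_to_nat [b] = (if b then 1 else 0)" by (simp add: bits_to_nat_def)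

lemma b2n_Cons: "bits_to_nat (b # xs) = (if b then 2 ^ length xs else 0) + bits_to_nat xs"
  using b2n_append[of "[b]" xs] by (simp add: b2n_single b2n_Nil)

lemma b2n_lt: "bits_to_nat xs < 2 ^ length xs"
  by (induction xs) (auto simp: b2n_Cons b2n_Nil)

lemma b2n_rep_True: "bits_to_nat (replicate n True) = 2 ^ n - 1"
proof (induction n)
  case 0 then show ?case by (simp add: bits_to_nat_def)
next
  case (Suc n)
  have "(1::nat) \<le> 2 ^ n" by simp
  then show ?case using Suc by (simp add: b2n_Cons)
qed

lemma b2n_rep_False: "bits_to_nat (replicate n False) = 0"
  by (induction n) (auto simp: b2n_Cons bits_to_nat_def)

lemma b2n_prefix_lt:
  assumes "length x = length y" "k < length x" "take k x = take k y" "\<not> x ! k" "y ! k"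
  shows "bits_to_nat x < bits_to_nat y"
proof -
  have x: "x = take k x @ x ! k # drop (Suc k) x" using assms by (metis id_take_nth_drop)
  have y: "y = take k x @ y ! k # drop (Suc k) y" using assms by (metis id_take_nth_drop)
  define L where "L = length (drop (Suc k) x)"
  have L2: "length (drop (Suc k) y) = L" using assms L_def by simp
  have "bits_to_nat x = bits_to_nat (take k x) * 2 ^ Suc L + bits_to_nat (drop (Suc k) x)"
    using x b2n_append[of "take k x" "x ! k # drop (Suc k) x"] assms L_def
    by (simp add: b2n_Cons)
  moreover have "bits_to_nat y = bits_to_nat (take k x) * 2 ^ Suc L + 2 ^ L + bits_to_nat (drop (Suc k) y)"
    using y b2n_append[of "take k x" "y ! k # drop (Suc k) y"] assms L2
    by (simp add: b2n_Cons)
  moreover have "bits_to_nat (drop (Suc k) x) < 2 ^ L" using b2n_lt L_def by blast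
  ultimately show ?thesis by linarith
qed

definition Qf :: "nat \<Rightarrow> nat \<Rightarrow> nat \<Rightarrow> nat" where
  "Qf s E m = (if E = 0 then 2 * m else 2 ^ E * (2 ^ (s - 1) + m))"

definition Vf :: "nat \<Rightarrow> nat \<Rightarrow> nat \<Rightarrow> nat \<Rightarrow> ereal" where
  "Vf e s E m = (if E = 2 ^ e - 1 then \<infinity>
     else ereal (2 powr (- real_of_int (fp_bias e)) / 2 ^ (s - 1) * real (Qf s E m)))"

lemma Vf_nonneg: "0 \<le> Vf e s E m"
  by (simp add: Vf_def)

lemma Qf_strict:
  assumes "m1 < 2 ^ (s - 1)" "m2 < 2 ^ (s - 1)"
    and lex: "E1 < E2 \<or> (E1 = E2 \<and> m1 < m2)"
  shows "Qf s E1 m1 < Qf s E2 m2"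
proof (cases "E1 = E2")
  case True then show ?thesis using lex by (auto simp: Qf_def)
next
  case False
  let ?p = "2 ^ (s - 1) :: nat"
  have lt: "E1 < E2" using lex False by auto
  have a: "Qf s E1 m1 < 2 ^ (E1 + 1) * ?p"
  proof (cases "E1 = 0")
    case True then show ?thesis using assms by (simp add: Qf_def)
  next
    case False
    have "2 ^ E1 * (?p + m1) < 2 ^ E1 * (2 * ?p)" using assms by simp
    then show ?thesis using False by (simp add: Qf_def algebra_simps)
  qed
  have "2 ^ (E1 + 1) * ?p \<le> 2 ^ E2 * ?p"
  proof (intro mult_le_mono1)
    show "2 ^ (E1 + 1) \<le> (2::nat) ^ E2" by (rule power_increasing) (use lt in auto)
  qed
  also have "\<dots> \<le> Qf s E2 m2" using lt by (simp add: Qf_def)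
  finally show ?thesis using a by simp
qed

lemma Vf_strict:
  assumes "E1 < 2 ^ e" "E2 < 2 ^ e" "m1 < 2 ^ (s - 1)" "m2 < 2 ^ (s - 1)"
    and "E2 = 2 ^ e - 1 \<Longrightarrow> m2 = 0"
    and lex: "E1 < E2 \<or> (E1 = E2 \<and> m1 < m2)"
  shows "Vf e s E1 m1 < Vf e s E2 m2"
proof -
  have "E1 \<noteq> 2 ^ e - 1" using assms by auto
  moreover have "Qf s E1 m1 < Qf s E2 m2" using Qf_strict assms by blast
  moreover have "E2 \<noteq> 2 ^ e - 1 \<Longrightarrow> 2 powr (- real_of_int (fp_bias e)) / 2 ^ (s - 1) * real (Qf s E1 m1)
     < 2 powr (- real_of_int (fp_bias e)) / 2 ^ (s - 1) * real (Qf s E2 m2)"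
    using \<open>Qf s E1 m1 < Qf s E2 m2\<close> by (intro mult_strict_left_mono) auto
  ultimately show ?thesis
    by (auto simp: Vf_def)
qed

lemma fp_val_Vf:
  "fp_val e s x = (if fp_sign x then - Vf e s (fp_exp e x) (fp_sig e x) else Vf e s (fp_exp e x) (fp_sig e x))"
proof -
  let ?b = "real_of_int (fp_bias e)"
  let ?p = "(2::real) ^ (s - 1)"
  have z: "2 powr real_of_int (1 - fp_bias e) * (real m / ?p) = 2 powr (- ?b) / ?p * real (Qf s 0 m)" for m
  proof -
    have "2 powr real_of_int (1 - fp_bias e) = 2 * 2 powr (- ?b)"
      using powr_add[of 2 1 "- ?b"] by simp
    then show ?thesis by (simp add: Qf_def)
  qed
  have nz: "2 powr real_of_int (int E - fp_bias e) * (1 + real m / ?p) = 2 powr (- ?b) / ?p * real (Qf s E m)"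
    if "E \<noteq> 0" for E m
  proof -
    have "2 powr real_of_int (int E - fp_bias e) = 2 ^ E * 2 powr (- ?b)"
      by (simp add: powr_add[symmetric] powr_realpow[symmetric])
    then show ?thesis using that by (simp add: Qf_def field_simps)
  qed
  show ?thesis
    unfolding fp_val_def Let_def Vf_def
    using z nz by (auto simp: algebra_simps)
qed

lemma split_T:
  assumes "length x = e + s" "e \<ge> 1" "s \<ge> 1"
  shows "bits_to_nat (drop 1 x) = fp_exp e x * 2 ^ (s - 1) + fp_sig e x"
    and "fp_exp e x < 2 ^ e" and "fp_sig e x < 2 ^ (s - 1)"
    and "bits_to_nat x = (if fp_sign x then 2 ^ (e + s - 1) else 0) + bits_to_nat (drop 1 x)"
proof -
  have d: "drop 1 x = take e (drop 1 x) @ drop (e + 1) x"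
    by (metis append_take_drop_id drop_drop add.commute)
  have l: "length (drop (e + 1) x) = s - 1" using assms by simp
  show "bits_to_nat (drop 1 x) = fp_exp e x * 2 ^ (s - 1) + fp_sig e x"
    unfolding fp_exp_def fp_sig_def using b2n_append[of "take e (drop 1 x)" "drop (e+1) x"] d l
    by simp
  show "fp_exp e x < 2 ^ e" unfolding fp_exp_def
    using b2n_lt[of "take e (drop 1 x)"] assms by simp
  show "fp_sig e x < 2 ^ (s - 1)" unfolding fp_sig_def using b2n_lt[of "drop (e+1) x"] l by simp
  obtain h t where x: "x = h # t" using assms by (cases x) auto
  show "bits_to_nat x = (if fp_sign x then 2 ^ (e + s - 1) else 0) + bits_to_nat (drop 1 x)"
    using assms x by (auto simp: b2n_Cons fp_sign_def)
qed

lemma val_strict: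
  assumes "length x = e + s" "length y = e + s" "e \<ge> 1"
    "\<not> fp_is_nan e x" "\<not> fp_is_nan e y"
    "bits_to_nat (drop 1 x) < bits_to_nat (drop 1 y)" "s \<ge> 1"
  shows "Vf e s (fp_exp e x) (fp_sig e x) < Vf e s (fp_exp e y) (fp_sig e y)"
proof -
  note sx = split_T[OF assms(1,3,7)] and sy = split_T[OF assms(2,3,7)]
  let ?p = "2 ^ (s - 1) :: nat"
  have lex: "fp_exp e x < fp_exp e y \<or> (fp_exp e x = fp_exp e y \<and> fp_sig e x < fp_sig e y)"
  proof (rule ccontr)
    assume "\<not> ?thesis"
    then have c: "fp_exp e y < fp_exp e x \<or> (fp_exp e x = fp_exp e y \<and> fp_sig e y \<le> fp_sig e x)"
      by auto
    show False
    proof (cases "fp_exp e y < fp_exp e x")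
      case True
      have "fp_exp e y * ?p + fp_sig e y < (fp_exp e y + 1) * ?p" using sy by simp
      also have "\<dots> \<le> fp_exp e x * ?p" using True by (intro mult_le_mono1) simp
      finally show False using sx(1) sy(1) assms(6) by linarith
    next
      case False
      then show False using c sx(1) sy(1) assms(6) by auto
    qed
  qed
  show ?thesis
    apply (rule Vf_strict[OF sx(2) sy(2) sx(3) sy(3) _ lex])
    using assms(5) sy(2) unfolding fp_is_nan_def by auto
qed

lemma ord_lemma:
  assumes "length x = e + s" "length y = e + s" "e \<ge> 1"
    "\<not> fp_is_nan e x" "\<not> fp_is_nan e y"
    "take k x = take k y" "1 \<le> k" "k < e + s" "\<not> x ! k" "y ! k" "s \<ge> 1"
  shows "if fp_sign x then fp_val e s y < fp_val e s x else fp_val e s x < fp_val e s y"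
proof -
  have sg: "fp_sign x = fp_sign y" unfolding fp_sign_def
    using assms(6,7) by (metis One_nat_def Suc_le_eq nth_take)
  have "bits_to_nat x < bits_to_nat y" using b2n_prefix_lt assms by auto
  then have "bits_to_nat (drop 1 x) < bits_to_nat (drop 1 y)"
    using split_T(4)[OF assms(1,3,11)] split_T(4)[OF assms(2,3,11)] sg by (auto split: if_splits)
  then have "Vf e s (fp_exp e x) (fp_sig e x) < Vf e s (fp_exp e y) (fp_sig e y)"
    using val_strict assms by blast
  then show ?thesis using sg by (simp add: fp_val_Vf)
qed

lemma sign_val:
  shows "fp_sign x \<Longrightarrow> fp_val e s x \<le> 0" and "\<not> fp_sign x \<Longrightarrow> 0 \<le> fp_val e s x"
  using Vf_nonneg[of e s "fp_exp e x" "fp_sig e x"] by (auto simp: fp_val_Vf)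

lemma inf_witness:
  fixes b :: bool and s :: nat
  assumes "e \<ge> 1"
  defines "w \<equiv> b # replicate e True @ replicate (s - 1) False"
  shows "length w = e + (s - 1) + 1" "\<not> fp_is_nan e w" "take 0 w = []"
    "fp_val e s w = (if b then -\<infinity> else \<infinity>)"
proof -
  have ex: "fp_exp e w = 2 ^ e - 1" unfolding w_def fp_exp_def by (simp add: b2n_rep_True)
  have sg: "fp_sig e w = 0" unfolding w_def fp_sig_def by (simp add: b2n_rep_False)
  show "length w = e + (s - 1) + 1" unfolding w_def by simp
  show "\<not> fp_is_nan e w" using sg by (simp add: fp_is_nan_def)
  show "take 0 w = []" by simp
  have "fp_sign w = b" unfolding w_def fp_sign_def by simp
  then show "fp_val e s w = (if b then -\<infinity> else \<infinity>)"
    unfolding fp_val_Vf Vf_def ex by simp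
qed

theorem lemma1:
  fixes e s k :: nat and maxi :: bool
    and phi :: "'m \<Rightarrow> bool"
    and cost :: "'m \<Rightarrow> bool list"
    and tau d :: "bool list" and M M' :: 'm
  assumes "e > 1" and "s > 1"
    and sorted: "\<And>N. length (cost N) = e + s"
    and sat: "\<exists>N. phi N \<and> \<not> fp_is_nan e (cost N)"
    and "k < e + s" and "length tau = k"
    and attr: "fp_attractor e s maxi tau d"
    and M: "phi M \<and> \<not> fp_is_nan e (cost M)" "take (k + 1) (cost M) = tau @ [d ! k]"
    and M': "phi M' \<and> \<not> fp_is_nan e (cost M')" "take (k + 1) (cost M') = tau @ [\<not> d ! k]"
  shows "if maxi then fp_val e s (cost M') \<le> fp_val e s (cost M)
         else fp_val e s (cost M) \<le> fp_val e s (cost M')"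
proof -
  define x where "x = cost M"
  define y where "y = cost M'"
  have e1: "e \<ge> 1" and s1: "s \<ge> 1" using assms(1,2) by auto
  have lx: "length x = e + s" and ly: "length y = e + s" using sorted x_def y_def by auto
  have nx: "\<not> fp_is_nan e x" and ny: "\<not> fp_is_nan e y" using M M' x_def y_def by auto
  have kn: "k < e + s" using assms(5) .
  have ld: "length d = e + s" and nd: "\<not> fp_is_nan e d" and td: "take k d = tau"
    and dmin: "\<And>z. length z = e + s \<Longrightarrow> \<not> fp_is_nan e z \<Longrightarrow> take k z = tau \<Longrightarrow>
        (if maxi then fp_val e s z \<le> fp_val e s d else fp_val e s d \<le> fp_val e s z)"
    using attr assms(6) unfolding fp_attractor_def by auto
  have tx: "take k x = tau" using M(2) x_def assms(6)
    by (metis take_take min.absorb1 le_add1 append_eq_conv_conj)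
  have ty: "take k y = tau" using M'(2) y_def assms(6)
    by (metis take_take min.absorb1 le_add1 append_eq_conv_conj)
  have xk: "x ! k = d ! k" using M(2) x_def assms(6)
    by (metis lessI nth_append_length nth_take Suc_eq_plus1)
  have yk: "y ! k = (\<not> d ! k)" using M'(2) y_def assms(6)
    by (metis lessI nth_append_length nth_take Suc_eq_plus1)
  show ?thesis
  proof (cases "k = 0")
    case True
    then have sx: "fp_sign x = d ! 0" and sy: "fp_sign y = (\<not> d ! 0)"
      using xk yk by (auto simp: fp_sign_def)
    show ?thesis
    proof (cases maxi)
      case mx: True
      obtain w where w: "length w = e + s" "\<not> fp_is_nan e w" "take 0 w = []" "fp_val e s w = \<infinity>"
        using inf_witness[OF e1, where b=False and s=s] s1 by (metis add.assoc le_add_diff_inverse2)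
      have "fp_val e s w \<le> fp_val e s d" using dmin[OF w(1,2)] w(3) True assms(6) mx by auto
      then have "fp_val e s d = \<infinity>" using w(4) by simp
      then have "\<not> d ! 0" using sign_val(1)[of d e s] by (auto simp: fp_sign_def)
      then show ?thesis using mx sx sy sign_val[of x e s] sign_val[of y e s] x_def y_def by auto
    next
      case mn: False
      obtain w where w: "length w = e + s" "\<not> fp_is_nan e w" "take 0 w = []" "fp_val e s w = -\<infinity>"
        using inf_witness[OF e1, where b=True and s=s] s1 by (metis add.assoc le_add_diff_inverse2)
      have "fp_val e s d \<le> fp_val e s w" using dmin[OF w(1,2)] w(3) True assms(6) mn by auto
      then have "fp_val e s d = -\<infinity>" using w(4) by simp
      then have "d ! 0" using sign_val(2)[of d e s] by (auto simp: fp_sign_def)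
      then show ?thesis using mn sx sy sign_val[of x e s] sign_val[of y e s] x_def y_def by auto
    qed
  next
    case False
    then have k1: "1 \<le> k" by simp
    have sgx: "fp_sign x = fp_sign d" and sgy: "fp_sign y = fp_sign d"
      unfolding fp_sign_def using tx ty td k1 by (metis One_nat_def Suc_le_eq nth_take)+
    have vd: "if maxi then fp_val e s y \<le> fp_val e s d else fp_val e s d \<le> fp_val e s y"
      using dmin[OF ly ny ty] .
    note o = ord_lemma[OF _ _ e1 _ _ _ k1 kn _ _ s1]
    show ?thesis
    proof (cases "d ! k")
      case dT: True
      have xy: "if fp_sign y then fp_val e s x < fp_val e s y else fp_val e s y < fp_val e s x"
        using o[OF ly lx ny nx] ty tx xk yk dT by simp
      have yd: "if fp_sign y then fp_val e s d < fp_val e s y else fp_val e s y < fp_val e s d"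
        using o[OF ly ld ny nd] ty td yk dT by simp
      show ?thesis using xy yd vd sgx sgy x_def y_def
        by (auto split: if_splits simp: not_le[symmetric] less_imp_le)
    next
      case dF: False
      have xy: "if fp_sign x then fp_val e s y < fp_val e s x else fp_val e s x < fp_val e s y"
        using o[OF lx ly nx ny] ty tx xk yk dF by simp
      have yd: "if fp_sign d then fp_val e s y < fp_val e s d else fp_val e s d < fp_val e s y"
        using o[OF ld ly nd ny] ty td yk dF by simp
      show ?thesis using xy yd vd sgx sgy x_def y_def
        by (auto split: if_splits simp: not_le[symmetric] less_imp_le)
    qed
  qed
qed

end
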